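(* In the social learning model with Gaussian signals, for every $\varepsilon>0$ there exists $k>0$ such that for all $t\ge 1$, $$\mathbb{P}(T_1=t)\ge\frac{k}{t^{1+\varepsilon}}.$$
   Context: Social learning model. A state $\theta\in\{-1,+1\}$ is drawn with $\mathbb{P}(\theta=+1)=\mathbb{P}(\theta=-1)=1/2$. Agents $t=1,2,\dots$ receive private signals $s_t\in\mathbb{R}$ that are i.i.d. conditionally on $\theta$, with CDF $F_+$ if $\theta=+1$ and $F_-$ if $\theta=-1$; $F_+$ and $F_-$ are mutually absolutely continuous. Let $L_t=\log\frac{\mathbb{P}(\theta=+1\mid s_t)}{\mathbb{P}(\theta=-1\mid s_t)}$ be the private log-likelihood ratio, and let $G_+$, $G_-$ denote the CDFs of $L_t$ conditional on $\theta=+1$, $\theta=-1$ respectively. Signals are assumed unbounded: for every $M\in\mathbb{R}$, $\mathbb{P}(L_t>M)>0$ and $\mathbb{P}(L_t<-M)>0$. Agent $t$ observes $a_1,\dots,a_{t-1}$ and her own signal and chooses $a_t\in\{-1,+1\}$ (utility $1$ if $a_t=\theta$, else $0$). The public belief is $\mu_t=\mathbb{P}(\theta=+1\mid a_1,\dots,a_{t-1})$ and $\ell_t=\log\frac{\mu_t}{1-\mu_t}$ (so $\ell_1=0$). In equilibrium $a_t=+1$ iff $\ell_t+L_t>0$, and otherwise $a_t=-1$. Consequently $\ell_{t+1}=\ell_t+D_+(\ell_t)$ if $a_t=+1$ and $\ell_{t+1}=\ell_t+D_-(\ell_t)$ if $a_t=-1$, where $D_+(x)=\log\frac{1-G_+(-x)}{1-G_-(-x)}$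 and $D_-(x)=\log\frac{G_+(-x)}{G_-(-x)}$. We write $\mathbb{P}_+(\cdot)=\mathbb{P}(\cdot\mid\theta=+1)$ and $\mathbb{E}_+$ for the corresponding expectation. Gaussian signals: $F_+$ is the normal distribution with mean $+1$ and variance $\sigma^2$, and $F_-$ is the normal distribution with mean $-1$ and variance $\sigma^2$, for some $\sigma>0$. The time of first mistake is $T_1=\min\{t: a_t\ne\theta\}$ if $a_t\neq\theta$ for some $t$, and $T_1=0$ otherwise. *)

theory Defs
  imports "HOL-Probability.Probability"
begin

definition sig_dist :: "real \<Rightarrow> real \<Rightarrow> real measure" where
  "sig_dist \<sigma> m = density lborel (normal_density m \<sigma>)"

text \<open>Private log-likelihood ratio L = log P(theta=+1|s)/P(theta=-1|s); with the uniform
  prior this is the log of the ratio of the two signal densities.\<close>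
definition Lpriv :: "real \<Rightarrow> real \<Rightarrow> real" where
  "Lpriv \<sigma> s = ln (normal_density 1 \<sigma> s / normal_density (-1) \<sigma> s)"

definition Gp :: "real \<Rightarrow> real \<Rightarrow> real" where
  "Gp \<sigma> x = measure (sig_dist \<sigma> 1) {s \<in> space (sig_dist \<sigma> 1). Lpriv \<sigma> s \<le> x}"

definition Gm :: "real \<Rightarrow> real \<Rightarrow> real" where
  "Gm \<sigma> x = measure (sig_dist \<sigma> (-1)) {s \<in> space (sig_dist \<sigma> (-1)). Lpriv \<sigma> s \<le> x}"

definition Dp :: "real \<Rightarrow> real \<Rightarrow> real" where
  "Dp \<sigma> x = ln ((1 - Gp \<sigma> (-x)) / (1 - Gm \<sigma> (-x)))"

definition Dm :: "real \<Rightarrow> real \<Rightarrow> real" where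
  "Dm \<sigma> x = ln (Gp \<sigma> (-x) / Gm \<sigma> (-x))"

text \<open>Public log-likelihood ratio ell_t along a realisation of signals \<omega> (signal of
  agent t is \<omega> t, t \<ge> 1; \<omega> 0 is unused). ell_1 = 0.\<close>
primrec ell :: "real \<Rightarrow> (nat \<Rightarrow> real) \<Rightarrow> nat \<Rightarrow> real" where
  "ell \<sigma> \<omega> 0 = 0"
| "ell \<sigma> \<omega> (Suc t) =
     (if t = 0 then 0
      else (let l = ell \<sigma> \<omega> t in
            if l + Lpriv \<sigma> (\<omega> t) > 0 then l + Dp \<sigma> l else l + Dm \<sigma> l))"

definition action :: "real \<Rightarrow> (nat \<Rightarrow> real) \<Rightarrow> nat \<Rightarrow> real" where
  "action \<sigma> \<omega> t = (if ell \<sigma> \<omega> t + Lpriv \<sigma> (\<omega> t) > 0 then 1 else -1)"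

text \<open>Time of first mistake (0 if no mistake is ever made), for state \<theta>.\<close>
definition T1 :: "real \<Rightarrow> real \<Rightarrow> (nat \<Rightarrow> real) \<Rightarrow> nat" where
  "T1 \<sigma> \<theta> \<omega> =
     (if \<exists>t\<ge>1. action \<sigma> \<omega> t \<noteq> \<theta> then (LEAST t. t \<ge> 1 \<and> action \<sigma> \<omega> t \<noteq> \<theta>) else 0)"

definition signals :: "real \<Rightarrow> real \<Rightarrow> (nat \<Rightarrow> real) measure" where
  "signals \<sigma> \<theta> = PiM UNIV (\<lambda>_. sig_dist \<sigma> \<theta>)"

definition probT1 :: "real \<Rightarrow> nat \<Rightarrow> real" where
  "probT1 \<sigma> t =
     1/2 * measure (signals \<sigma> 1) {\<omega> \<in> space (signals \<sigma> 1). T1 \<sigma> 1 \<omega> = t}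
   + 1/2 * measure (signals \<sigma> (-1)) {\<omega> \<in> space (signals \<sigma> (-1)). T1 \<sigma> (-1) \<omega> = t}"

end

theory Submission
  imports Defs
begin


lemma Lpriv_eq: assumes "\<sigma> > 0" shows "Lpriv \<sigma> s = 2 * s / \<sigma>\<^sup>2"
proof -
  have "normal_density 1 \<sigma> s / normal_density (-1) \<sigma> s
      = exp (-(s - 1)\<^sup>2/ (2 * \<sigma>\<^sup>2)) / exp (-(s + 1)\<^sup>2/ (2 * \<sigma>\<^sup>2))"
    using assms by (simp add: normal_density_def)
  also have "\<dots> = exp (-(s - 1)\<^sup>2/ (2 * \<sigma>\<^sup>2) - (-(s + 1)\<^sup>2/ (2 * \<sigma>\<^sup>2)))"
    by (simp only: exp_diff)
  also have "-(s - 1)\<^sup>2/ (2 * \<sigma>\<^sup>2) - (-(s + 1)\<^sup>2/ (2 * \<sigma>\<^sup>2)) = 2 * s / \<sigma>\<^sup>2"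
    using assms by (simp add: field_simps power2_eq_square)
  finally show ?thesis by (simp add: Lpriv_def)
qed

lemma prob_sig: "\<sigma> > 0 \<Longrightarrow> prob_space (sig_dist \<sigma> m)"
  unfolding sig_dist_def by (rule prob_space_normal_density)

lemma sets_sig[simp]: "sets (sig_dist \<sigma> m) = sets borel"
  unfolding sig_dist_def by simp

lemma space_sig[simp]: "space (sig_dist \<sigma> m) = UNIV"
  unfolding sig_dist_def by simp

lemma Lpriv_meas[measurable]: "Lpriv \<sigma> \<in> borel_measurable borel"
  unfolding Lpriv_def[abs_def] by measurable

definition F :: "real \<Rightarrow> real \<Rightarrow> real \<Rightarrow> real" where
  "F \<sigma> m y = measure (sig_dist \<sigma> m) {..y}"

lemma Gp_F: assumes "\<sigma> > 0" shows "Gp \<sigma> x = F \<sigma> 1 (\<sigma>\<^sup>2 * x / 2)"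
proof -
  have "{s \<in> space (sig_dist \<sigma> 1). Lpriv \<sigma> s \<le> x} = {..\<sigma>\<^sup>2 * x / 2}"
    using assms by (auto simp: Lpriv_eq field_simps)
  thus ?thesis by (simp add: Gp_def F_def)
qed

lemma Gm_F: assumes "\<sigma> > 0" shows "Gm \<sigma> x = F \<sigma> (-1) (\<sigma>\<^sup>2 * x / 2)"
proof -
  have "{s \<in> space (sig_dist \<sigma> (-1)). Lpriv \<sigma> s \<le> x} = {..\<sigma>\<^sup>2 * x / 2}"
    using assms by (auto simp: Lpriv_eq field_simps)
  thus ?thesis by (simp add: Gm_def F_def)
qed

lemma dens_cmp:
  assumes sg: "\<sigma> > 0" and A: "A \<in> sets borel" and c: "c \<ge> 0"
    and le: "\<And>s. s \<in> A \<Longrightarrow> normal_density m \<sigma> s \<le> c * normal_density m' \<sigma> s"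
  shows "measure (sig_dist \<sigma> m) A \<le> c * measure (sig_dist \<sigma> m') A"
proof -
  interpret p1: prob_space "sig_dist \<sigma> m" using sg by (rule prob_sig)
  interpret p2: prob_space "sig_dist \<sigma> m'" using sg by (rule prob_sig)
  have "emeasure (sig_dist \<sigma> m) A = (\<integral>\<^sup>+ s. ennreal (normal_density m \<sigma> s) * indicator A s \<partial>lborel)"
    unfolding sig_dist_def using A by (simp add: emeasure_density)
  also have "\<dots> \<le> (\<integral>\<^sup>+ s. ennreal c * (ennreal (normal_density m' \<sigma> s) * indicator A s) \<partial>lborel)"
    by (intro nn_integral_mono) (auto simp: indicator_def le ennreal_mult[symmetric] c)
  also have "\<dots> = ennreal c * (\<integral>\<^sup>+ s. ennreal (normal_density m' \<sigma> s) * indicator A s \<partial>lborel)"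
    using A by (intro nn_integral_cmult) auto
  also have "(\<integral>\<^sup>+ s. ennreal (normal_density m' \<sigma> s) * indicator A s \<partial>lborel) = emeasure (sig_dist \<sigma> m') A"
    unfolding sig_dist_def using A by (simp add: emeasure_density)
  finally have "ennreal (measure (sig_dist \<sigma> m) A) \<le> ennreal (c * measure (sig_dist \<sigma> m') A)"
    by (simp add: p1.emeasure_eq_measure p2.emeasure_eq_measure ennreal_mult c)
  moreover have "0 \<le> c * measure (sig_dist \<sigma> m') A" using c by simp
  ultimately show ?thesis by (rule ennreal_le_iff[THEN iffD1, rotated])
qed

lemma interval_lb:
  assumes "\<sigma> > 0" "a \<le> b"
  shows "measure (sig_dist \<sigma> m) {a<..b} \<ge> (b - a) * (exp (-(\<bar>b - m\<bar> + (b - a))\<^sup>2/(2*\<sigma>\<^sup>2)) / sqrt (2*pi*\<sigma>\<^sup>2))"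
proof -
  interpret p1: prob_space "sig_dist \<sigma> m" using assms(1) by (rule prob_sig)
  define c where "c = exp (-(\<bar>b - m\<bar> + (b - a))\<^sup>2/(2*\<sigma>\<^sup>2)) / sqrt (2*pi*\<sigma>\<^sup>2)"
  have c0: "c \<ge> 0" by (simp add: c_def)
  have pt: "c \<le> normal_density m \<sigma> s" if "s \<in> {a<..b}" for s
  proof -
    have "\<bar>s - m\<bar> \<le> \<bar>b - m\<bar> + (b - a)" using that by auto
    hence "\<bar>s - m\<bar>\<^sup>2 \<le> (\<bar>b - m\<bar> + (b - a))\<^sup>2"
      by (intro power_mono) auto
    hence "(s - m)\<^sup>2 \<le> (\<bar>b - m\<bar> + (b - a))\<^sup>2" by simp
    hence "-(\<bar>b - m\<bar> + (b - a))\<^sup>2/(2*\<sigma>\<^sup>2) \<le> -(s - m)\<^sup>2/(2*\<sigma>\<^sup>2)"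
      using assms by (simp add: divide_right_mono)
    thus ?thesis unfolding c_def normal_density_def by (simp add: divide_right_mono)
  qed
  have "ennreal (c * (b - a)) = (\<integral>\<^sup>+ s. ennreal c * indicator {a<..b} s \<partial>lborel)"
    using assms c0 by (subst nn_integral_cmult_indicator) (auto simp: ennreal_mult)
  also have "\<dots> \<le> (\<integral>\<^sup>+ s. ennreal (normal_density m \<sigma> s) * indicator {a<..b} s \<partial>lborel)"
    by (intro nn_integral_mono) (auto simp: indicator_def pt)
  also have "\<dots> = emeasure (sig_dist \<sigma> m) {a<..b}"
    unfolding sig_dist_def by (simp add: emeasure_density)
  finally have "ennreal (c * (b - a)) \<le> ennreal (measure (sig_dist \<sigma> m) {a<..b})"
    by (simp add: p1.emeasure_eq_measure)
  hence "c * (b - a) \<le> measure (sig_dist \<sigma> m) {a<..b}" by (rule ennreal_le_iff[THEN iffD1, rotated]) simp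
  thus ?thesis unfolding c_def[symmetric] by (simp add: mult.commute)
qed

lemma F_mono: assumes "\<sigma> > 0" "y \<le> y'" shows "F \<sigma> m y \<le> F \<sigma> m y'"
proof -
  interpret p: prob_space "sig_dist \<sigma> m" using assms(1) by (rule prob_sig)
  show ?thesis unfolding F_def using assms(2) by (intro p.finite_measure_mono) auto
qed

lemma F_nonneg: "F \<sigma> m y \<ge> 0" by (simp add: F_def)

lemma F_le1: assumes "\<sigma> > 0" shows "F \<sigma> m y \<le> 1"
proof -
  interpret p: prob_space "sig_dist \<sigma> m" using assms(1) by (rule prob_sig)
  show ?thesis unfolding F_def by simp
qed

lemma Ioc_F: assumes "\<sigma> > 0" "a \<le> b"
  shows "measure (sig_dist \<sigma> m) {a<..b} = F \<sigma> m b - F \<sigma> m a"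
proof -
  interpret p: prob_space "sig_dist \<sigma> m" using assms(1) by (rule prob_sig)
  have "{a<..b} = {..b} - {..a}" by auto
  thus ?thesis unfolding F_def using assms(2) by (simp add: p.finite_measure_Diff)
qed

lemma F_lb: assumes "\<sigma> > 0"
  shows "F \<sigma> m y \<ge> exp (-(\<bar>y - m\<bar> + 1)\<^sup>2/(2*\<sigma>\<^sup>2)) / sqrt (2*pi*\<sigma>\<^sup>2)"
proof -
  have "exp (-(\<bar>y - m\<bar> + 1)\<^sup>2/(2*\<sigma>\<^sup>2)) / sqrt (2*pi*\<sigma>\<^sup>2) \<le> measure (sig_dist \<sigma> m) {y-1<..y}"
    using interval_lb[OF assms, of "y-1" y m] by simp
  also have "\<dots> = F \<sigma> m y - F \<sigma> m (y-1)" using Ioc_F[OF assms, of "y-1" y] by simp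
  also have "\<dots> \<le> F \<sigma> m y" using F_nonneg[of \<sigma> m "y-1"] by simp
  finally show ?thesis .
qed

lemma F_pos: assumes "\<sigma> > 0" shows "F \<sigma> m y > 0"
proof -
  have "0 < exp (-(\<bar>y - m\<bar> + 1)\<^sup>2/(2*\<sigma>\<^sup>2)) / sqrt (2*pi*\<sigma>\<^sup>2)" using assms by simp
  thus ?thesis using F_lb[OF assms, of y m] by (rule less_le_trans)
qed

lemma F_lt1: assumes "\<sigma> > 0" shows "F \<sigma> m y < 1"
proof -
  interpret p: prob_space "sig_dist \<sigma> m" using assms(1) by (rule prob_sig)
  have "0 < exp (-(\<bar>(y+1) - m\<bar> + 1)\<^sup>2/(2*\<sigma>\<^sup>2)) / sqrt (2*pi*\<sigma>\<^sup>2)" using assms by simp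
  also have "\<dots> \<le> measure (sig_dist \<sigma> m) {y<..y+1}"
    using interval_lb[OF assms, of y "y+1" m] by simp
  also have "\<dots> \<le> measure (sig_dist \<sigma> m) (space (sig_dist \<sigma> m) - {..y})"
    by (intro p.finite_measure_mono) auto
  also have "\<dots> = 1 - F \<sigma> m y" unfolding F_def by (subst p.prob_compl) auto
  finally show ?thesis by simp
qed

lemma nd_ratio: "normal_density 1 \<sigma> s = exp (2 * s / \<sigma>\<^sup>2) * normal_density (-1) \<sigma> s"
  if "\<sigma> > 0" for s
proof -
  have e: "-(s - 1)\<^sup>2/ (2 * \<sigma>\<^sup>2) = 2 * s / \<sigma>\<^sup>2 + -(s + 1)\<^sup>2/ (2 * \<sigma>\<^sup>2)"
    using that by (simp add: field_simps power2_eq_square)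
  show ?thesis unfolding normal_density_def e exp_add by simp
qed

lemma F_lr: assumes "\<sigma> > 0" shows "F \<sigma> 1 y \<le> exp (2 * y / \<sigma>\<^sup>2) * F \<sigma> (-1) y"
  unfolding F_def
proof (rule dens_cmp[OF assms])
  fix s assume "s \<in> {..y}"
  hence "exp (2 * s / \<sigma>\<^sup>2) \<le> exp (2 * y / \<sigma>\<^sup>2)" using assms by (simp add: divide_right_mono)
  thus "normal_density 1 \<sigma> s \<le> exp (2 * y / \<sigma>\<^sup>2) * normal_density (-1) \<sigma> s"
    using nd_ratio[OF assms, of s] by (simp add: mult_right_mono)
qed auto

lemma F_tail: assumes "\<sigma> > 0" "y \<le> m" shows "F \<sigma> m y \<le> exp (-(m - y)\<^sup>2/(2*\<sigma>\<^sup>2))"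
proof -
  interpret p: prob_space "sig_dist \<sigma> y" using assms(1) by (rule prob_sig)
  have "F \<sigma> m y \<le> exp (-(m - y)\<^sup>2/(2*\<sigma>\<^sup>2)) * measure (sig_dist \<sigma> y) {..y}"
    unfolding F_def
  proof (rule dens_cmp[OF assms(1)])
    fix s assume s: "s \<in> {..y}"
    have "-(s - m)\<^sup>2/ (2 * \<sigma>\<^sup>2) \<le> -(m - y)\<^sup>2/(2*\<sigma>\<^sup>2) + -(s - y)\<^sup>2/ (2 * \<sigma>\<^sup>2)"
    proof -
      have "(s - m)\<^sup>2 - (s - y)\<^sup>2 = (m - y) * ((m - y) + 2 * (y - s))" by (simp add: power2_eq_square algebra_simps)
      also have "\<dots> \<ge> (m - y) * (m - y)" using assms(2) s by (intro mult_left_mono) auto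
      finally have "(m - y)\<^sup>2 + (s - y)\<^sup>2 \<le> (s - m)\<^sup>2" by (simp add: power2_eq_square)
      thus ?thesis using assms(1) by (simp add: field_simps)
    qed
    hence "exp (-(s - m)\<^sup>2/ (2 * \<sigma>\<^sup>2)) \<le> exp (-(m - y)\<^sup>2/(2*\<sigma>\<^sup>2)) * exp (-(s - y)\<^sup>2/ (2 * \<sigma>\<^sup>2))"
      by (simp add: exp_add[symmetric])
    thus "normal_density m \<sigma> s \<le> exp (-(m - y)\<^sup>2/(2*\<sigma>\<^sup>2)) * normal_density y \<sigma> s"
      unfolding normal_density_def by (simp add: divide_right_mono mult.commute mult.left_commute)
  qed auto
  also have "\<dots> \<le> exp (-(m - y)\<^sup>2/(2*\<sigma>\<^sup>2)) * 1" by (intro mult_left_mono) auto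
  finally show ?thesis by simp
qed

lemma F_strict: assumes "\<sigma> > 0" shows "F \<sigma> 1 0 < F \<sigma> (-1) 0"
proof -
  interpret p1: prob_space "sig_dist \<sigma> 1" using assms(1) by (rule prob_sig)
  interpret p2: prob_space "sig_dist \<sigma> (-1)" using assms(1) by (rule prob_sig)
  define r where "r = exp (2 * (-1) / \<sigma>\<^sup>2)"
  have r1: "r < 1" using assms unfolding r_def by simp
  have a: "F \<sigma> 1 (-1) \<le> r * F \<sigma> (-1) (-1)" using F_lr[OF assms, of "-1"] by (simp add: r_def)
  have b: "measure (sig_dist \<sigma> 1) {-1<..0} \<le> 1 * measure (sig_dist \<sigma> (-1)) {-1<..0}"
  proof (rule dens_cmp[OF assms])
    fix s :: real assume "s \<in> {-1<..0}"
    hence "exp (2 * s / \<sigma>\<^sup>2) \<le> 1" using assms by (simp add: divide_nonpos_pos)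
    thus "normal_density 1 \<sigma> s \<le> 1 * normal_density (-1) \<sigma> s"
      using nd_ratio[OF assms, of s] mult_right_mono[of "exp (2 * s / \<sigma>\<^sup>2)" 1 "normal_density (-1) \<sigma> s"]
      by simp
  qed auto
  have c: "F \<sigma> (-1) (-1) > 0" by (rule F_pos[OF assms])
  have "F \<sigma> 1 0 = F \<sigma> 1 (-1) + measure (sig_dist \<sigma> 1) {-1<..0}" using Ioc_F[OF assms, of "-1" 0 1] by simp
  also have "\<dots> \<le> r * F \<sigma> (-1) (-1) + (F \<sigma> (-1) 0 - F \<sigma> (-1) (-1))"
    using a b Ioc_F[OF assms, of "-1" 0 "-1"] by simp
  also have "\<dots> < F \<sigma> (-1) 0" using r1 c by (simp add: algebra_simps mult_strict_right_mono)
  finally show ?thesis .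
qed

lemma quad_aux: fixes u B e :: real assumes "u \<ge> 1" "B \<ge> 0" "e > 0"
  shows "(u + B)\<^sup>2 \<le> (1 + e) * (u - 1)\<^sup>2 + (B + 1)\<^sup>2 * (1 + 1/e)"
proof -
  define v where "v = u - 1"
  have "0 \<le> (e * v - (B + 1))\<^sup>2 / e" using assms by simp
  also have "(e * v - (B + 1))\<^sup>2 / e = e * v\<^sup>2 - 2 * (B+1) * v + (B + 1)\<^sup>2 / e"
    using assms by (simp add: field_simps power2_eq_square)
  finally have "0 \<le> e * v\<^sup>2 - 2 * (B+1) * v + (B + 1)\<^sup>2 / e" .
  moreover have "u + B = v + (B + 1)" by (simp add: v_def)
  ultimately show ?thesis unfolding v_def[symmetric]
    by (simp add: power2_eq_square algebra_simps add_divide_distrib)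
qed



definition gg :: "real \<Rightarrow> real \<Rightarrow> real" where "gg \<sigma> x = F \<sigma> 1 (\<sigma>\<^sup>2 * (-x) / 2)"
definition hh :: "real \<Rightarrow> real \<Rightarrow> real" where "hh \<sigma> x = F \<sigma> (-1) (\<sigma>\<^sup>2 * (-x) / 2)"

lemma Gp_gg: "\<sigma> > 0 \<Longrightarrow> Gp \<sigma> (-x) = gg \<sigma> x" by (simp add: Gp_F gg_def)
lemma Gm_hh: "\<sigma> > 0 \<Longrightarrow> Gm \<sigma> (-x) = hh \<sigma> x" by (simp add: Gm_F hh_def)
lemma Dp_gh: "\<sigma> > 0 \<Longrightarrow> Dp \<sigma> x = ln ((1 - gg \<sigma> x) / (1 - hh \<sigma> x))"
  by (simp add: Dp_def Gp_gg Gm_hh)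

context fixes \<sigma> :: real assumes sp: "\<sigma> > 0"
begin

lemma gg_lr: "gg \<sigma> x \<le> exp (-x) * hh \<sigma> x"
proof -
  have "2 * (\<sigma>\<^sup>2 * (-x) / 2) / \<sigma>\<^sup>2 = -x" using sp by (simp add: field_simps)
  thus ?thesis using F_lr[OF sp, of "\<sigma>\<^sup>2 * (-x) / 2"] by (simp add: gg_def hh_def)
qed

lemma gg_anti: "x \<le> x' \<Longrightarrow> gg \<sigma> x' \<le> gg \<sigma> x"
  unfolding gg_def using sp by (intro F_mono) (auto simp: mult_left_mono)
lemma hh_anti: "x \<le> x' \<Longrightarrow> hh \<sigma> x' \<le> hh \<sigma> x"
  unfolding hh_def using sp by (intro F_mono) (auto simp: mult_left_mono)
lemma gg_pos: "gg \<sigma> x > 0" unfolding gg_def using sp by (rule F_pos)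
lemma hh_pos: "hh \<sigma> x > 0" unfolding hh_def using sp by (rule F_pos)
lemma gg_lt1: "gg \<sigma> x < 1" unfolding gg_def using sp by (rule F_lt1)
lemma hh_lt1: "hh \<sigma> x < 1" unfolding hh_def using sp by (rule F_lt1)
lemma gh0: "gg \<sigma> 0 < hh \<sigma> 0" unfolding gg_def hh_def using F_strict[OF sp] by simp

lemma gg_le_hh: assumes "x \<ge> 0" shows "gg \<sigma> x \<le> hh \<sigma> x"
proof -
  have e: "exp (-x) \<le> 1" using assms by simp
  have "exp (-x) * hh \<sigma> x \<le> 1 * hh \<sigma> x" using e hh_pos[of x] by (intro mult_right_mono) auto
  thus ?thesis using gg_lr[of x] by simp
qed

definition D where "D x = ln ((1 - gg \<sigma> x) / (1 - hh \<sigma> x))"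

lemma D_nonneg: "x \<ge> 0 \<Longrightarrow> D x \<ge> 0"
  unfolding D_def using gg_le_hh[of x] gg_lt1[of x] hh_lt1[of x] by (simp add: field_simps)

definition K1 where "K1 = 1 / (1 - hh \<sigma> 0)"

lemma K1_pos: "K1 > 0" using hh_lt1[of 0] by (simp add: K1_def)

lemma D_le: assumes "x \<ge> 0" shows "D x \<le> K1 * hh \<sigma> x"
proof -
  have g: "0 < 1 - gg \<sigma> x" "0 < 1 - hh \<sigma> x" using gg_lt1[of x] hh_lt1[of x] by auto
  have "D x \<le> (1 - gg \<sigma> x) / (1 - hh \<sigma> x) - 1" unfolding D_def using g by (intro ln_le_minus_one) simp
  also have "\<dots> = (hh \<sigma> x - gg \<sigma> x) / (1 - hh \<sigma> x)" using g by (simp add: field_simps)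
  also have "\<dots> \<le> hh \<sigma> x / (1 - hh \<sigma> x)" using g gg_pos[of x] by (intro divide_right_mono) auto
  also have "\<dots> \<le> hh \<sigma> x / (1 - hh \<sigma> 0)"
    using g hh_anti[of 0 x] assms hh_pos[of x] hh_lt1[of 0] by (intro divide_left_mono) auto
  finally show ?thesis by (simp add: K1_def)
qed

lemma D_le_K1: assumes "x \<ge> 0" shows "D x \<le> K1"
proof -
  have "K1 * hh \<sigma> x \<le> K1 * 1" using hh_lt1[of x] K1_pos by (intro mult_left_mono) auto
  thus ?thesis using D_le[OF assms] by simp
qed

lemma exp_D: "exp (-(x + D x)) = exp (-x) * ((1 - hh \<sigma> x) / (1 - gg \<sigma> x))"
proof -
  have g: "0 < 1 - gg \<sigma> x" "0 < 1 - hh \<sigma> x" using gg_lt1[of x] hh_lt1[of x] by auto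
  have "exp (- D x) = (1 - hh \<sigma> x) / (1 - gg \<sigma> x)" unfolding D_def using g
    by (simp add: ln_div exp_diff)
  moreover have "exp (-(x + D x)) = exp (-x) * exp (- D x)" by (subst exp_add[symmetric]) simp
  ultimately show ?thesis by simp
qed

primrec xs :: "nat \<Rightarrow> real" where
  "xs 0 = 0"
| "xs (Suc n) = (if n = 0 then 0 else xs n + D (xs n))"

lemma xs_nonneg: "xs n \<ge> 0"
proof (induction n)
  case (Suc n) thus ?case using D_nonneg[of "xs n"] by auto
qed simp

lemma xs_step: "n \<ge> 1 \<Longrightarrow> xs (Suc n) = xs n + D (xs n)" by simp

lemma xs_mono: "m \<le> n \<Longrightarrow> xs m \<le> xs n"
proof (induction n)
  case (Suc n)
  have "xs n \<le> xs (Suc n)" using D_nonneg[OF xs_nonneg[of n]] by (cases n) auto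
  thus ?case using Suc by (cases "m = Suc n") auto
qed simp

definition \<delta> where "\<delta> = D 0"

lemma delta_pos: "\<delta> > 0"
  unfolding \<delta>_def D_def using gh0 gg_lt1[of 0] hh_lt1[of 0] by (simp add: field_simps)

lemma xs2: "xs 2 = \<delta>" by (simp add: \<delta>_def numeral_2_eq_2)

lemma xs_ge_delta: "n \<ge> 2 \<Longrightarrow> xs n \<ge> \<delta>" using xs_mono[of 2 n] xs2 by simp

definition \<rho> where "\<rho> = exp (-\<delta>)"
lemma rho: "\<rho> < 1" "\<rho> > 0" using delta_pos by (auto simp: \<rho>_def)

lemma g_tele: assumes "n \<ge> 2"
  shows "gg \<sigma> (xs n) \<le> (exp (- xs n) - exp (- xs (Suc n))) / (1 - \<rho>)"
proof -
  let ?x = "xs n" let ?g = "gg \<sigma> ?x" let ?h = "hh \<sigma> ?x"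
  have g: "0 < 1 - ?g" "0 < 1 - ?h" using gg_lt1 hh_lt1 by auto
  have x0: "?x \<ge> 0" by (rule xs_nonneg)
  have gh: "?g \<le> ?h" using gg_le_hh[OF x0] .
  have e: "exp (- xs (Suc n)) = exp (-?x) * ((1 - ?h) / (1 - ?g))"
    using assms exp_D[of ?x] by simp
  have "exp (-?x) - exp (- xs (Suc n)) = exp (-?x) * ((?h - ?g) / (1 - ?g))"
    unfolding e using g by (simp add: field_simps)
  also have "\<dots> \<ge> exp (-?x) * (?h - ?g)"
  proof (intro mult_left_mono)
    show "?h - ?g \<le> (?h - ?g) / (1 - ?g)" using g gh gg_pos[of ?x]
      by (simp add: le_divide_eq mult_left_le)
  qed simp
  finally have A: "exp (-?x) * (?h - ?g) \<le> exp (-?x) - exp (- xs (Suc n))" .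
  have "exp (-?x) \<le> \<rho>" unfolding \<rho>_def using xs_ge_delta[OF assms] by simp
  have B: "?g \<le> \<rho> * ?h"
    using gg_lr[of ?x] \<open>exp (-?x) \<le> \<rho>\<close> hh_pos[of ?x] by (meson mult_right_mono less_imp_le order_trans)
  have "(1 - \<rho>) * ?g \<le> (1 - \<rho>) * (exp (-?x) * ?h)"
    using gg_lr[of ?x] rho by (intro mult_left_mono) auto
  also have "\<dots> = exp (-?x) * (?h - \<rho> * ?h)" by (simp add: algebra_simps)
  also have "\<dots> \<le> exp (-?x) * (?h - ?g)" using B by (intro mult_left_mono) auto
  also have "\<dots> \<le> exp (-?x) - exp (- xs (Suc n))" by (rule A)
  finally show ?thesis using rho by (simp add: le_divide_eq mult.commute)
qed

lemma sum_g: "(\<Sum>n\<in>{1..<N}. gg \<sigma> (xs n)) \<le> gg \<sigma> 0 + 1 / (1 - \<rho>)"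
proof -
  have "(\<Sum>n\<in>{1..<N}. gg \<sigma> (xs n)) \<le> (\<Sum>n\<in>insert 1 {2..<N}. gg \<sigma> (xs n))"
    by (intro sum_mono2) (auto intro: less_imp_le gg_pos)
  also have "\<dots> = gg \<sigma> 0 + (\<Sum>n\<in>{2..<N}. gg \<sigma> (xs n))" by simp
  also have "(\<Sum>n\<in>{2..<N}. gg \<sigma> (xs n)) \<le> 1 / (1 - \<rho>)"
  proof (cases "N \<ge> 2")
    case True
    have "(\<Sum>n\<in>{2..<N}. gg \<sigma> (xs n)) \<le> (\<Sum>n\<in>{2..<N}. (exp (- xs n) - exp (- xs (Suc n))) / (1 - \<rho>))"
      by (intro sum_mono g_tele) auto
    also have "\<dots> = (\<Sum>n\<in>{2..<N}. (\<lambda>k. - exp (- xs k)) (Suc n) - (\<lambda>k. - exp (- xs k)) n) / (1 - \<rho>)"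
      by (simp add: sum_divide_distrib)
    also have "\<dots> = (exp (- xs 2) - exp (- xs N)) / (1 - \<rho>)" using True by (subst sum_Suc_diff') auto
    also have "\<dots> \<le> 1 / (1 - \<rho>)"
    proof -
      have "exp (- xs 2) \<le> 1" using xs_nonneg[of 2] by simp
      hence "exp (- xs 2) - exp (- xs N) \<le> 1" using exp_gt_zero[of "- xs N"] by linarith
      thus ?thesis using rho by (intro divide_right_mono) auto
    qed
    finally show ?thesis .
  next
    case False thus ?thesis using rho by simp
  qed
  finally show ?thesis by simp
qed

definition a0 where "a0 = exp (- (gg \<sigma> 0 + 1 / (1 - \<rho>)) / (1 - gg \<sigma> 0))"

lemma a0_pos: "a0 > 0" by (simp add: a0_def)

lemma factor_lb: assumes "x \<ge> 0" shows "exp (- gg \<sigma> x / (1 - gg \<sigma> 0)) \<le> 1 - gg \<sigma> x"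
proof -
  let ?g = "gg \<sigma> x" let ?gz = "gg \<sigma> 0"
  have g: "0 < 1 - ?g" "0 < 1 - ?gz" "?g \<le> ?gz" "?g > 0" using gg_lt1 gg_anti[OF assms] gg_pos by auto
  have "ln (1 / (1 - ?g)) \<le> 1 / (1 - ?g) - 1" using g by (intro ln_le_minus_one) auto
  hence "- ln (1 - ?g) \<le> ?g / (1 - ?g)" using g by (simp add: ln_div field_simps)
  also have "\<dots> \<le> ?g / (1 - ?gz)" using g by (intro divide_left_mono) auto
  finally have "- ?g / (1 - ?gz) \<le> ln (1 - ?g)" by simp
  hence "exp (- ?g / (1 - ?gz)) \<le> exp (ln (1 - ?g))" by simp
  thus ?thesis using g by simp
qed

lemma prod_lb: "(\<Prod>n\<in>{1..<N}. 1 - gg \<sigma> (xs n)) \<ge> a0"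
proof -
  have "(\<Prod>n\<in>{1..<N}. 1 - gg \<sigma> (xs n)) \<ge> (\<Prod>n\<in>{1..<N}. exp (- gg \<sigma> (xs n) / (1 - gg \<sigma> 0)))"
    by (intro prod_mono conjI factor_lb xs_nonneg) simp
  also have "(\<Prod>n\<in>{1..<N}. exp (- gg \<sigma> (xs n) / (1 - gg \<sigma> 0)))
      = exp (- (\<Sum>n\<in>{1..<N}. gg \<sigma> (xs n)) / (1 - gg \<sigma> 0))"
    by (simp add: exp_sum[symmetric] sum_negf sum_divide_distrib)
  also have "\<dots> \<ge> a0"
  proof -
    have "- (gg \<sigma> 0 + 1 / (1 - \<rho>)) / (1 - gg \<sigma> 0) \<le> - (\<Sum>n\<in>{1..<N}. gg \<sigma> (xs n)) / (1 - gg \<sigma> 0)"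
      using sum_g[of N] gg_lt1[of 0] by (intro divide_right_mono) auto
    thus ?thesis unfolding a0_def by simp
  qed
  finally show ?thesis .
qed

lemma growth: assumes "n \<ge> 1" "y \<le> xs n"
  shows "xs (n + j) - xs n \<le> real j * (K1 * hh \<sigma> y)"
proof (induction j)
  case (Suc j)
  have "xs (n + Suc j) = xs (n + j) + D (xs (n + j))" using assms by simp
  moreover have "D (xs (n + j)) \<le> K1 * hh \<sigma> y"
  proof -
    have "D (xs (n + j)) \<le> K1 * hh \<sigma> (xs (n + j))" by (rule D_le[OF xs_nonneg])
    also have "\<dots> \<le> K1 * hh \<sigma> y" using K1_pos assms(2) xs_mono[of n "n+j"]
      by (intro mult_left_mono hh_anti) auto
    finally show ?thesis .
  qed
  ultimately show ?case using Suc by (simp add: algebra_simps)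
qed simp

definition M where "M = K1 + 1"

lemma time_lb: assumes "t \<ge> 1" "xs t \<ge> M"
  shows "1 \<le> real t * (K1 * hh \<sigma> (xs t - M))"
proof -
  let ?y = "xs t - M"
  define n0 where "n0 = (LEAST n. xs n > ?y)"
  have M0: "M > 0" using K1_pos by (simp add: M_def)
  have t: "xs t > ?y" using M0 by simp
  hence n0: "xs n0 > ?y" unfolding n0_def by (rule LeastI)
  have n0t: "n0 \<le> t" unfolding n0_def using t by (rule Least_le)
  have n02: "n0 \<ge> 2"
  proof (rule ccontr)
    assume "\<not> n0 \<ge> 2"
    hence "n0 = 0 \<or> n0 = 1" by auto
    hence "xs n0 = 0" by auto
    with n0 assms(2) show False by simp
  qed
  have "\<not> xs (n0 - 1) > ?y" unfolding n0_def by (rule not_less_Least) (use n02 n0_def in simp)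
  hence p: "xs (n0 - 1) \<le> ?y" by simp
  have "xs n0 = xs (n0 - 1) + D (xs (n0 - 1))" using n02 xs_step[of "n0 - 1"] by (simp add: Suc_diff_1)
  also have "\<dots> \<le> ?y + K1" using p D_le_K1[OF xs_nonneg] by (meson add_mono)
  finally have a: "xs n0 \<le> ?y + K1" .
  have "xs (n0 + (t - n0)) - xs n0 \<le> real (t - n0) * (K1 * hh \<sigma> ?y)"
    using n02 n0 by (intro growth) auto
  hence "xs t - xs n0 \<le> real (t - n0) * (K1 * hh \<sigma> ?y)" using n0t by simp
  also have "\<dots> \<le> real t * (K1 * hh \<sigma> ?y)" using K1_pos hh_pos[of ?y]
    by (intro mult_right_mono) auto
  finally show ?thesis using a by (simp add: M_def)
qed

end



lemma tail_gh:
  fixes \<sigma> \<epsilon> M0 :: real assumes sp: "\<sigma> > 0" and ep: "\<epsilon> > 0" and M0: "M0 \<ge> 0"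
  shows "\<exists>c>0. \<forall>y\<ge>0. gg \<sigma> (y + M0) \<ge> c * hh \<sigma> y powr (1 + \<epsilon>)"
proof -
  define S where "S = \<sigma>\<^sup>2 / 2"
  have S: "S > 0" using sp by (simp add: S_def)
  define B where "B = S * M0 + 2"
  have B: "B \<ge> 0" using S M0 by (simp add: B_def)
  define C where "C = (B + 1)\<^sup>2 * (1 + 1/\<epsilon>)"
  define q where "q = sqrt (2*pi*\<sigma>\<^sup>2)"
  have q: "q > 0" using sp by (simp add: q_def)
  define c where "c = exp (-C/(2*\<sigma>\<^sup>2)) / q"
  have c: "c > 0" using q by (simp add: c_def)
  show ?thesis
  proof (intro exI[of _ c] conjI allI impI c)
    fix y :: real assume y: "y \<ge> 0"
    define u where "u = S * y"
    have u: "u \<ge> 0" using S y by (simp add: u_def)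
    have gl: "gg \<sigma> (y + M0) \<ge> exp (-(u + B)\<^sup>2/(2*\<sigma>\<^sup>2)) / q"
    proof -
      have e: "\<sigma>\<^sup>2 * (- (y + M0)) / 2 - 1 = -(u + B - 1)"
        by (simp add: u_def B_def S_def field_simps)
      have "u + B - 1 \<ge> 0" using u S M0 by (simp add: B_def)
      hence "\<bar>\<sigma>\<^sup>2 * (- (y + M0)) / 2 - 1\<bar> + 1 = u + B" unfolding e by simp
      thus ?thesis using F_lb[OF sp, of "\<sigma>\<^sup>2 * (- (y + M0)) / 2" 1] by (simp add: gg_def q_def)
    qed
    have hpos: "hh \<sigma> y \<ge> 0" using hh_pos[OF sp] less_imp_le by blast
    have hh1: "hh \<sigma> y \<le> 1" using hh_lt1[OF sp, of y] by simp
    show "gg \<sigma> (y + M0) \<ge> c * hh \<sigma> y powr (1 + \<epsilon>)"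
    proof (cases "u \<ge> 1")
      case True
      have hu: "hh \<sigma> y \<le> exp (-(u - 1)\<^sup>2/(2*\<sigma>\<^sup>2))"
      proof -
        have "hh \<sigma> y = F \<sigma> (-1) (-u)" by (simp add: hh_def u_def S_def)
        also have "\<dots> \<le> exp (-((-1) - (-u))\<^sup>2/(2*\<sigma>\<^sup>2))" using True by (intro F_tail[OF sp]) auto
        also have "((-1) - (-u))\<^sup>2 = (u - 1)\<^sup>2" by (simp add: power2_eq_square algebra_simps)
        finally show ?thesis .
      qed
      have "hh \<sigma> y powr (1 + \<epsilon>) \<le> exp (-(u - 1)\<^sup>2/(2*\<sigma>\<^sup>2)) powr (1 + \<epsilon>)"
        using hu hpos ep by (intro powr_mono2) auto
      also have "\<dots> = exp (-(u - 1)\<^sup>2/(2*\<sigma>\<^sup>2) * (1 + \<epsilon>))" by (rule exp_powr_real)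
      finally have hp: "hh \<sigma> y powr (1 + \<epsilon>) \<le> exp (-(u - 1)\<^sup>2/(2*\<sigma>\<^sup>2) * (1 + \<epsilon>))" .
      have qa: "(u + B)\<^sup>2 \<le> (1 + \<epsilon>) * (u - 1)\<^sup>2 + C" unfolding C_def using quad_aux[OF True B ep] .
      have "-C/(2*\<sigma>\<^sup>2) + -(u - 1)\<^sup>2/(2*\<sigma>\<^sup>2) * (1 + \<epsilon>) \<le> -(u + B)\<^sup>2/(2*\<sigma>\<^sup>2)"
      proof -
        have "-C/(2*\<sigma>\<^sup>2) + -(u - 1)\<^sup>2/(2*\<sigma>\<^sup>2) * (1 + \<epsilon>) = - (C + (1 + \<epsilon>) * (u - 1)\<^sup>2) / (2*\<sigma>\<^sup>2)"
          using sp by (simp add: field_simps)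
        also have "\<dots> \<le> -(u + B)\<^sup>2/(2*\<sigma>\<^sup>2)" using qa sp by (intro divide_right_mono) auto
        finally show ?thesis .
      qed
      hence "exp (-C/(2*\<sigma>\<^sup>2)) * exp (-(u - 1)\<^sup>2/(2*\<sigma>\<^sup>2) * (1 + \<epsilon>)) \<le> exp (-(u + B)\<^sup>2/(2*\<sigma>\<^sup>2))"
        by (simp add: exp_add[symmetric])
      hence "c * exp (-(u - 1)\<^sup>2/(2*\<sigma>\<^sup>2) * (1 + \<epsilon>)) \<le> exp (-(u + B)\<^sup>2/(2*\<sigma>\<^sup>2)) / q"
        using q by (simp add: c_def field_simps)
      moreover have "c * hh \<sigma> y powr (1 + \<epsilon>) \<le> c * exp (-(u - 1)\<^sup>2/(2*\<sigma>\<^sup>2) * (1 + \<epsilon>))"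
        using hp c by (intro mult_left_mono) auto
      ultimately show ?thesis using gl by linarith
    next
      case False
      have "hh \<sigma> y powr (1 + \<epsilon>) \<le> 1" using hpos hh1 ep by (intro powr_le1) auto
      hence "c * hh \<sigma> y powr (1 + \<epsilon>) \<le> c" using c by (simp add: mult_left_le)
      also have "c \<le> exp (-(u + B)\<^sup>2/(2*\<sigma>\<^sup>2)) / q"
      proof -
        have "(u + B)\<^sup>2 \<le> (1 + B)\<^sup>2" using False u B by (intro power_mono) auto
        also have "\<dots> \<le> C" unfolding C_def using ep
          by (simp add: mult_le_cancel_left1 add.commute)
        finally have "(u + B)\<^sup>2 \<le> C" .
        hence "-C/(2*\<sigma>\<^sup>2) \<le> -(u + B)\<^sup>2/(2*\<sigma>\<^sup>2)" using sp by (intro divide_right_mono) auto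
        thus ?thesis unfolding c_def using q by (intro divide_right_mono) auto
      qed
      finally show ?thesis using gl by linarith
    qed
  qed
qed



context fixes \<sigma> :: real assumes sp: "\<sigma> > 0"
begin

lemma Dp_D: "Dp \<sigma> x = D \<sigma> x" using Dp_gh[OF sp] by (simp add: D_def[OF sp])

lemma action_iff: "action \<sigma> \<omega> r = 1 \<longleftrightarrow> ell \<sigma> \<omega> r + Lpriv \<sigma> (\<omega> r) > 0"
  by (simp add: action_def)

lemma ell_eq: "(\<forall>r. 1 \<le> r \<and> r < n \<longrightarrow> action \<sigma> \<omega> r = 1) \<Longrightarrow> ell \<sigma> \<omega> n = xs \<sigma> n"
proof (induction n)
  case 0 thus ?case by (simp add: xs.simps[OF sp])
next
  case (Suc n)
  show ?case
  proof (cases "n = 0")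
    case True thus ?thesis by (simp add: xs.simps[OF sp])
  next
    case False
    have e: "ell \<sigma> \<omega> n = xs \<sigma> n" using Suc by auto
    have a: "ell \<sigma> \<omega> n + Lpriv \<sigma> (\<omega> n) > 0" using Suc.prems False action_iff by auto
    show ?thesis using False e a by (simp add: xs.simps[OF sp] Dp_D Let_def)
  qed
qed

lemma lp_iff: "(\<forall>r. 1 \<le> r \<and> r < n \<longrightarrow> Lpriv \<sigma> (\<omega> r) > - xs \<sigma> r)
   \<longleftrightarrow> (\<forall>r. 1 \<le> r \<and> r < n \<longrightarrow> action \<sigma> \<omega> r = 1)"
proof (induction n)
  case (Suc n)
  have L: "(\<forall>r. 1 \<le> r \<and> r < Suc n \<longrightarrow> Lpriv \<sigma> (\<omega> r) > - xs \<sigma> r) \<longleftrightarrow>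
     (\<forall>r. 1 \<le> r \<and> r < n \<longrightarrow> Lpriv \<sigma> (\<omega> r) > - xs \<sigma> r) \<and> (1 \<le> n \<longrightarrow> Lpriv \<sigma> (\<omega> n) > - xs \<sigma> n)"
    by (auto simp: less_Suc_eq)
  have R: "(\<forall>r. 1 \<le> r \<and> r < Suc n \<longrightarrow> action \<sigma> \<omega> r = 1) \<longleftrightarrow>
     (\<forall>r. 1 \<le> r \<and> r < n \<longrightarrow> action \<sigma> \<omega> r = 1) \<and> (1 \<le> n \<longrightarrow> action \<sigma> \<omega> n = 1)"
    by (auto simp: less_Suc_eq)
  have key: "(\<forall>r. 1 \<le> r \<and> r < n \<longrightarrow> Lpriv \<sigma> (\<omega> r) > - xs \<sigma> r) \<Longrightarrow>
     (Lpriv \<sigma> (\<omega> n) > - xs \<sigma> n \<longleftrightarrow> action \<sigma> \<omega> n = 1)"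
  proof -
    assume H: "\<forall>r. 1 \<le> r \<and> r < n \<longrightarrow> Lpriv \<sigma> (\<omega> r) > - xs \<sigma> r"
    hence "\<forall>r. 1 \<le> r \<and> r < n \<longrightarrow> action \<sigma> \<omega> r = 1" using Suc.IH by blast
    hence "ell \<sigma> \<omega> n = xs \<sigma> n" by (rule ell_eq)
    thus ?thesis using action_iff[of \<omega> n] by auto
  qed
  show ?case unfolding L R using Suc.IH key by blast
qed simp

lemma T1_iff: assumes "t \<ge> 1"
  shows "T1 \<sigma> 1 \<omega> = t \<longleftrightarrow>
     (\<forall>r. 1 \<le> r \<and> r < t \<longrightarrow> action \<sigma> \<omega> r = 1) \<and> action \<sigma> \<omega> t \<noteq> 1"
proof
  assume T: "T1 \<sigma> 1 \<omega> = t"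
  have ex: "\<exists>t\<ge>1. action \<sigma> \<omega> t \<noteq> 1"
  proof (rule ccontr)
    assume "\<not> ?thesis" hence "T1 \<sigma> 1 \<omega> = 0" unfolding T1_def by (rule if_not_P)
    thus False using T assms by simp
  qed
  then obtain t0 where t0: "t0 \<ge> 1 \<and> action \<sigma> \<omega> t0 \<noteq> 1" by blast
  have Tl: "t = (LEAST t. t \<ge> 1 \<and> action \<sigma> \<omega> t \<noteq> 1)" using T ex by (simp add: T1_def)
  have "t \<ge> 1 \<and> action \<sigma> \<omega> t \<noteq> 1" unfolding Tl using t0 by (rule LeastI)
  moreover have "action \<sigma> \<omega> r = 1" if "1 \<le> r" "r < t" for r
  proof (rule ccontr)
    assume "action \<sigma> \<omega> r \<noteq> 1"
    hence "t \<le> r" unfolding Tl using that by (intro Least_le) auto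
    thus False using that by simp
  qed
  ultimately show "(\<forall>r. 1 \<le> r \<and> r < t \<longrightarrow> action \<sigma> \<omega> r = 1) \<and> action \<sigma> \<omega> t \<noteq> 1" by auto
next
  assume A: "(\<forall>r. 1 \<le> r \<and> r < t \<longrightarrow> action \<sigma> \<omega> r = 1) \<and> action \<sigma> \<omega> t \<noteq> 1"
  have ex: "\<exists>t\<ge>1. action \<sigma> \<omega> t \<noteq> 1" using A assms by blast
  have "(LEAST t. t \<ge> 1 \<and> action \<sigma> \<omega> t \<noteq> 1) = t"
  proof (rule Least_equality)
    show "t \<ge> 1 \<and> action \<sigma> \<omega> t \<noteq> 1" using A assms by simp
    fix y assume "1 \<le> y \<and> action \<sigma> \<omega> y \<noteq> 1"
    thus "t \<le> y" using A by (meson not_le)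
  qed
  thus "T1 \<sigma> 1 \<omega> = t" using ex by (simp add: T1_def)
qed

lemma T1_iff2: assumes "t \<ge> 1"
  shows "T1 \<sigma> 1 \<omega> = t \<longleftrightarrow>
     (\<forall>i\<in>{1..t}. \<omega> i \<in> (if i < t then {s. Lpriv \<sigma> s > - xs \<sigma> i} else {s. Lpriv \<sigma> s \<le> - xs \<sigma> t}))"
proof -
  have "T1 \<sigma> 1 \<omega> = t \<longleftrightarrow> (\<forall>r. 1 \<le> r \<and> r < t \<longrightarrow> Lpriv \<sigma> (\<omega> r) > - xs \<sigma> r) \<and> action \<sigma> \<omega> t \<noteq> 1"
    using T1_iff[OF assms] lp_iff by blast
  also have "\<dots> \<longleftrightarrow> (\<forall>r. 1 \<le> r \<and> r < t \<longrightarrow> Lpriv \<sigma> (\<omega> r) > - xs \<sigma> r) \<and> Lpriv \<sigma> (\<omega> t) \<le> - xs \<sigma> t"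
  proof -
    have "(\<forall>r. 1 \<le> r \<and> r < t \<longrightarrow> Lpriv \<sigma> (\<omega> r) > - xs \<sigma> r) \<Longrightarrow> ell \<sigma> \<omega> t = xs \<sigma> t"
      using lp_iff ell_eq by blast
    thus ?thesis using action_iff[of \<omega> t] by auto
  qed
  also have "\<dots> \<longleftrightarrow> (\<forall>i\<in>{1..t}. \<omega> i \<in> (if i < t then {s. Lpriv \<sigma> s > - xs \<sigma> i} else {s. Lpriv \<sigma> s \<le> - xs \<sigma> t}))"
    using assms by (auto simp: le_less)
  finally show ?thesis .
qed

lemma P_T1: assumes "t \<ge> 1"
  shows "measure (signals \<sigma> 1) {\<omega> \<in> space (signals \<sigma> 1). T1 \<sigma> 1 \<omega> = t}
       = (\<Prod>i\<in>{1..<t}. 1 - gg \<sigma> (xs \<sigma> i)) * gg \<sigma> (xs \<sigma> t)"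
proof -
  interpret P: product_prob_space "\<lambda>_::nat. sig_dist \<sigma> 1" UNIV
    by (rule product_prob_spaceI) (rule prob_sig[OF sp])
  interpret S1: prob_space "sig_dist \<sigma> 1" by (rule prob_sig[OF sp])
  define X where "X i = (if i < t then {s. Lpriv \<sigma> s > - xs \<sigma> i} else {s. Lpriv \<sigma> s \<le> - xs \<sigma> t})" for i
  have Xs: "X i \<in> sets borel" for i unfolding X_def by auto
  have ev: "{\<omega> \<in> space (signals \<sigma> 1). T1 \<sigma> 1 \<omega> = t} =
      {\<omega> \<in> space (PiM UNIV (\<lambda>_. sig_dist \<sigma> 1)). \<forall>i\<in>{1..t}. \<omega> i \<in> X i}"
    unfolding signals_def X_def using T1_iff2[OF assms] by auto
  have "emeasure (signals \<sigma> 1) {\<omega> \<in> space (signals \<sigma> 1). T1 \<sigma> 1 \<omega> = t}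
      = (\<Prod>i\<in>{1..t}. emeasure (sig_dist \<sigma> 1) (X i))"
    unfolding ev unfolding signals_def by (rule P.emeasure_PiM_Collect) (auto simp: Xs)
  also have "\<dots> = ennreal (\<Prod>i\<in>{1..t}. measure (sig_dist \<sigma> 1) (X i))"
    by (simp add: P.M.emeasure_eq_measure prod_ennreal)
  finally have "measure (signals \<sigma> 1) {\<omega> \<in> space (signals \<sigma> 1). T1 \<sigma> 1 \<omega> = t}
      = (\<Prod>i\<in>{1..t}. measure (sig_dist \<sigma> 1) (X i))"
    unfolding signals_def by (simp add: P.emeasure_eq_measure prod_nonneg)
  also have "{1..t} = insert t {1..<t}" using assms by auto
  also have "(\<Prod>i\<in>insert t {1..<t}. measure (sig_dist \<sigma> 1) (X i))
      = measure (sig_dist \<sigma> 1) (X t) * (\<Prod>i\<in>{1..<t}. measure (sig_dist \<sigma> 1) (X i))" by simp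
  also have "measure (sig_dist \<sigma> 1) (X t) = gg \<sigma> (xs \<sigma> t)"
    by (simp add: X_def Gp_def Gp_gg[OF sp, symmetric])
  also have "(\<Prod>i\<in>{1..<t}. measure (sig_dist \<sigma> 1) (X i)) = (\<Prod>i\<in>{1..<t}. 1 - gg \<sigma> (xs \<sigma> i))"
  proof (rule prod.cong)
    fix i assume "i \<in> {1..<t}"
    hence "X i = space (sig_dist \<sigma> 1) - {s. Lpriv \<sigma> s \<le> - xs \<sigma> i}" by (auto simp: X_def)
    hence "measure (sig_dist \<sigma> 1) (X i) = 1 - measure (sig_dist \<sigma> 1) {s. Lpriv \<sigma> s \<le> - xs \<sigma> i}"
      using P.M.prob_compl[of "{s. Lpriv \<sigma> s \<le> - xs \<sigma> i}"] by simp
    thus "measure (sig_dist \<sigma> 1) (X i) = 1 - gg \<sigma> (xs \<sigma> i)"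
      by (simp add: Gp_def Gp_gg[OF sp, symmetric])
  qed simp
  finally show ?thesis by simp
qed

end



theorem theorem5:
  fixes \<sigma> \<epsilon> :: real
  assumes "\<sigma> > 0" and "\<epsilon> > 0"
  shows "\<exists>k>0. \<forall>t::nat. t \<ge> 1 \<longrightarrow> probT1 \<sigma> t \<ge> k / (real t) powr (1 + \<epsilon>)"
proof -
  note sp = assms(1)
  define e where "e = 1 + \<epsilon>"
  have e: "e > 0" using assms(2) by (simp add: e_def)
  have K: "K1 \<sigma> > 0" by (rule K1_pos[OF sp])
  have M0: "M \<sigma> \<ge> 0" using K by (simp add: M_def[OF sp])
  obtain c where c: "c > 0" and cb: "\<And>y. y \<ge> 0 \<Longrightarrow> gg \<sigma> (y + M \<sigma>) \<ge> c * hh \<sigma> y powr e"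
    using tail_gh[OF sp assms(2) M0] unfolding e_def by blast
  define k1 where "k1 = min (gg \<sigma> (M \<sigma>)) (c / K1 \<sigma> powr e)"
  have k1: "k1 > 0" using gg_pos[OF sp] c K by (simp add: k1_def)
  define k where "k = 1/2 * a0 \<sigma> * k1"
  have k: "k > 0" using a0_pos[OF sp] k1 by (simp add: k_def)
  show ?thesis
  proof (intro exI[of _ k] conjI allI impI k)
    fix t :: nat assume t: "t \<ge> 1"
    have tp: "real t powr e \<ge> 1" using t e by (intro ge_one_powr_ge_zero) auto
    have gb: "gg \<sigma> (xs \<sigma> t) \<ge> k1 / real t powr e"
    proof (cases "xs \<sigma> t < M \<sigma>")
      case True
      have "k1 / real t powr e \<le> k1" using tp k1 by (simp add: divide_le_eq mult_le_cancel_left1)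
      also have "\<dots> \<le> gg \<sigma> (M \<sigma>)" by (simp add: k1_def)
      also have "\<dots> \<le> gg \<sigma> (xs \<sigma> t)" using True by (intro gg_anti[OF sp]) simp
      finally show ?thesis .
    next
      case False
      define y where "y = xs \<sigma> t - M \<sigma>"
      have y: "y \<ge> 0" using False by (simp add: y_def)
      have tl: "1 \<le> real t * (K1 \<sigma> * hh \<sigma> y)" unfolding y_def using t False by (intro time_lb[OF sp]) auto
      have tpos: "real t > 0" using t by simp
      have hy: "hh \<sigma> y \<ge> 1 / (K1 \<sigma> * real t)" using tl K tpos by (simp add: field_simps)
      have "(1 / (K1 \<sigma> * real t)) powr e \<le> hh \<sigma> y powr e"
        using hy K tpos e by (intro powr_mono2) auto
      moreover have "(1 / (K1 \<sigma> * real t)) powr e = 1 / (K1 \<sigma> powr e * real t powr e)"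
        using K tpos by (simp add: powr_divide powr_mult)
      ultimately have hp: "1 / (K1 \<sigma> powr e * real t powr e) \<le> hh \<sigma> y powr e" by simp
      have "k1 / real t powr e \<le> (c / K1 \<sigma> powr e) / real t powr e"
        using tp by (intro divide_right_mono) (auto simp: k1_def)
      also have "\<dots> = c * (1 / (K1 \<sigma> powr e * real t powr e))" by simp
      also have "\<dots> \<le> c * hh \<sigma> y powr e" using hp c by (intro mult_left_mono) auto
      also have "\<dots> \<le> gg \<sigma> (y + M \<sigma>)" by (rule cb[OF y])
      also have "y + M \<sigma> = xs \<sigma> t" by (simp add: y_def)
      finally show ?thesis .
    qed
    have "k / real t powr (1 + \<epsilon>) = 1/2 * a0 \<sigma> * (k1 / real t powr e)" by (simp add: k_def e_def)
    also have "\<dots> \<le> 1/2 * a0 \<sigma> * gg \<sigma> (xs \<sigma> t)"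
      using gb a0_pos[OF sp] by (intro mult_left_mono) auto
    also have "\<dots> \<le> 1/2 * ((\<Prod>i\<in>{1..<t}. 1 - gg \<sigma> (xs \<sigma> i)) * gg \<sigma> (xs \<sigma> t))"
      using prod_lb[OF sp, of t] gg_pos[OF sp, of "xs \<sigma> t"] by (simp add: mult_right_mono)
    also have "\<dots> = 1/2 * measure (signals \<sigma> 1) {\<omega> \<in> space (signals \<sigma> 1). T1 \<sigma> 1 \<omega> = t}"
      using P_T1[OF sp t] by simp
    also have "\<dots> \<le> probT1 \<sigma> t" unfolding probT1_def by simp
    finally show "k / real t powr (1 + \<epsilon>) \<le> probT1 \<sigma> t" .
  qed
qed


end
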